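(* There exists a constant $C'>0$ depending only on $\eta$ and $t$ such that, provided $c_I,c_A$ are sufficiently small depending only on $\eta$: (i) $\mathbb P_p(\psi_1\vee\psi_2=1)\le\eta/2$; (ii) for every $q\in[0,1]^N$ with $$\|(q-p)_{>A}\|_t\ge C'\left(\frac{\|p_{>A}\|_1^{\frac{2-t}{t}}}{n^{\frac{2t-2}{t}}}+\frac1n\right),$$ we have $\mathbb P_q(\psi_1\vee\psi_2=0)\le\eta/2$.
   Context: Binomial model: $N\ge2$, $n\ge2$ even. For $q\in[0,1]^N$ one observes $X_1,\dots,X_n$ i.i.d. in $\{0,1\}^N$ with mutually independent coordinates $X_l(j)\sim\mathrm{Ber}(q_j)$; $\mathbb P_q$ is their joint law. Known $p\in[0,1]^N$ with $p_1\ge\dots\ge p_N$ and $\max_jp_j\le1/2$; $\eta\in(0,1)$; $t\in[1,2]$, $r=\frac{2t}{4-t}$, $b=\frac{4-2t}{4-t}$; $\|x\|_s=(\sum_j|x_j|^s)^{1/s}$; $x_{>u}=(0,\dots,0,x_{u+1},\dots,x_N)$. $I=\min\{J\in\{0,\dots,N\}:\sum_{i>J}p_i^2\le c_I/n^2\}$; $A=\max\{a\in\{1,\dots,I\}:p_a^{b/2}\ge c_A/(\sqrt n(\sum_{i\le I}p_i^r)^{1/4})\}$ with $\max\emptyset=-\infty$, $x_{>-\infty}=x$; $c_I,c_A>0$ small constants depending only on $\eta$. $N_j=\sum_{l=1}^nX_l(j)$; $\psi_2=\mathbf 1\{\exists j>A:N_j\ge2\}$; $T_1=\sum_{i>A}(N_i/n-p_i)$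 and, with $\bar c=4/\sqrt\eta$, $\psi_1=\mathbf 1\{|T_1|>\bar c\sqrt{\sum_{i>A}p_i/n}\}$; $\psi_1\vee\psi_2=\max(\psi_1,\psi_2)$. *)

theory Defs
  imports "HOL-Analysis.Analysis"
begin

text \<open>Indices of coordinates are 1..N, indices of observations are 1..n.
  A sample is X :: nat => nat => bool, X l j = X_l(j).\<close>

definition pow0 :: "real \<Rightarrow> real \<Rightarrow> real" where
  "pow0 x a = (if a = 0 then 1 else x powr a)"

definition samples :: "nat \<Rightarrow> nat \<Rightarrow> (nat \<Rightarrow> nat \<Rightarrow> bool) set" where
  "samples N n = PiE {1..n} (\<lambda>_. PiE {1..N} (\<lambda>_. UNIV))"

definition sample_weight :: "nat \<Rightarrow> nat \<Rightarrow> (nat \<Rightarrow> real) \<Rightarrow> (nat \<Rightarrow> nat \<Rightarrow> bool) \<Rightarrow> real" where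
  "sample_weight N n q X = (\<Prod>l\<in>{1..n}. \<Prod>j\<in>{1..N}. if X l j then q j else 1 - q j)"

definition Pq :: "nat \<Rightarrow> nat \<Rightarrow> (nat \<Rightarrow> real) \<Rightarrow> ((nat \<Rightarrow> nat \<Rightarrow> bool) \<Rightarrow> bool) \<Rightarrow> real" where
  "Pq N n q E = (\<Sum>X\<in>samples N n. if E X then sample_weight N n q X else 0)"

definition cnt :: "nat \<Rightarrow> (nat \<Rightarrow> nat \<Rightarrow> bool) \<Rightarrow> nat \<Rightarrow> nat" where
  "cnt n X j = card {l\<in>{1..n}. X l j}"

definition r_of :: "real \<Rightarrow> real" where "r_of t = 2 * t / (4 - t)"
definition b_of :: "real \<Rightarrow> real" where "b_of t = (4 - 2 * t) / (4 - t)"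

definition I_idx :: "real \<Rightarrow> nat \<Rightarrow> nat \<Rightarrow> (nat \<Rightarrow> real) \<Rightarrow> nat" where
  "I_idx cI N n p = (LEAST J. J \<le> N \<and> (\<Sum>i\<in>{J<..N}. (p i)\<^sup>2) \<le> cI / (real n)\<^sup>2)"

text \<open>A; the value 0 encodes max of the empty set (= -infinity), which is harmless
  since x_{>0} = x = x_{>-infinity}.\<close>
definition A_idx :: "real \<Rightarrow> real \<Rightarrow> real \<Rightarrow> nat \<Rightarrow> nat \<Rightarrow> (nat \<Rightarrow> real) \<Rightarrow> nat" where
  "A_idx t cI cA N n p =
    (let I = I_idx cI N n p;
         S = {a\<in>{1..I}. pow0 (p a) (b_of t / 2)
               \<ge> cA / (sqrt (real n) * (\<Sum>i\<in>{1..I}. p i powr r_of t) powr (1/4))}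
     in if S = {} then 0 else Max S)"

definition psi2 :: "nat \<Rightarrow> nat \<Rightarrow> nat \<Rightarrow> (nat \<Rightarrow> nat \<Rightarrow> bool) \<Rightarrow> bool" where
  "psi2 A N n X = (\<exists>j\<in>{A<..N}. cnt n X j \<ge> 2)"

definition T1 :: "nat \<Rightarrow> nat \<Rightarrow> nat \<Rightarrow> (nat \<Rightarrow> real) \<Rightarrow> (nat \<Rightarrow> nat \<Rightarrow> bool) \<Rightarrow> real" where
  "T1 A N n p X = (\<Sum>i\<in>{A<..N}. real (cnt n X i) / real n - p i)"

definition psi1 :: "real \<Rightarrow> nat \<Rightarrow> nat \<Rightarrow> nat \<Rightarrow> (nat \<Rightarrow> real) \<Rightarrow> (nat \<Rightarrow> nat \<Rightarrow> bool) \<Rightarrow> bool" where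
  "psi1 \<eta> A N n p X = (\<bar>T1 A N n p X\<bar> > (4 / sqrt \<eta>) * sqrt ((\<Sum>i\<in>{A<..N}. p i) / real n))"

definition test :: "real \<Rightarrow> real \<Rightarrow> real \<Rightarrow> real \<Rightarrow> nat \<Rightarrow> nat \<Rightarrow> (nat \<Rightarrow> real) \<Rightarrow> (nat \<Rightarrow> nat \<Rightarrow> bool) \<Rightarrow> bool" where
  "test \<eta> t cI cA N n p X =
    (let A = A_idx t cI cA N n p in psi1 \<eta> A N n p X \<or> psi2 A N n X)"

definition tail_norm :: "real \<Rightarrow> nat \<Rightarrow> nat \<Rightarrow> (nat \<Rightarrow> real) \<Rightarrow> real" where
  "tail_norm t A N x = (\<Sum>j\<in>{A<..N}. \<bar>x j\<bar> powr t) powr (1 / t)"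

end

theory Submission
  imports Defs
begin

definition Ew :: "nat \<Rightarrow> nat \<Rightarrow> (nat \<Rightarrow> real) \<Rightarrow> ((nat \<Rightarrow> nat \<Rightarrow> bool) \<Rightarrow> real) \<Rightarrow> real" where
  "Ew N n q f = (\<Sum>X\<in>samples N n. sample_weight N n q X * f X)"

definition cw :: "nat \<Rightarrow> (nat \<Rightarrow> real) \<Rightarrow> nat \<Rightarrow> (nat \<Rightarrow> bool) \<Rightarrow> real" where
  "cw n q j c = (\<Prod>l\<in>{1..n}. if c l then q j else 1 - q j)"

definition Ec :: "nat \<Rightarrow> (nat \<Rightarrow> real) \<Rightarrow> nat \<Rightarrow> ((nat \<Rightarrow> bool) \<Rightarrow> real) \<Rightarrow> real" where
  "Ec n q j G = (\<Sum>c\<in>PiE {1..n} (\<lambda>_. UNIV). cw n q j c * G c)"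

definition tr :: "nat \<Rightarrow> nat \<Rightarrow> (nat \<Rightarrow> nat \<Rightarrow> bool) \<Rightarrow> nat \<Rightarrow> nat \<Rightarrow> bool" where
  "tr N n X = (\<lambda>j\<in>{1..N}. \<lambda>l\<in>{1..n}. X l j)"

lemma Pq_Ew: "Pq N n q E = Ew N n q (\<lambda>X. if E X then 1 else 0)"
  unfolding Pq_def Ew_def by (intro sum.cong) auto

lemma Ew_col:
  "Ew N n q (\<lambda>X. \<Prod>j\<in>{1..N}. G j (tr N n X j)) = (\<Prod>j\<in>{1..N}. Ec n q j (G j))"
proof -
  let ?C = "PiE {1..N} (\<lambda>_. PiE {1..n} (\<lambda>_. UNIV::bool set))"
  define tr' where "tr' = (\<lambda>Y. \<lambda>l\<in>{1..n}. \<lambda>j\<in>{1..N}. (Y::nat\<Rightarrow>nat\<Rightarrow>bool) j l)"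
  have "Ew N n q (\<lambda>X. \<Prod>j\<in>{1..N}. G j (tr N n X j))
      = (\<Sum>X\<in>samples N n. \<Prod>j\<in>{1..N}. cw n q j (tr N n X j) * G j (tr N n X j))"
    unfolding Ew_def
  proof (intro sum.cong refl)
    fix X assume X: "X \<in> samples N n"
    have "sample_weight N n q X = (\<Prod>j\<in>{1..N}. cw n q j (tr N n X j))"
      unfolding sample_weight_def cw_def tr_def
      by (subst prod.swap) (intro prod.cong refl, auto)
    then show "sample_weight N n q X * (\<Prod>j\<in>{1..N}. G j (tr N n X j)) =
         (\<Prod>j\<in>{1..N}. cw n q j (tr N n X j) * G j (tr N n X j))"
      by (simp add: prod.distrib)
  qed
  also have "\<dots> = (\<Sum>Y\<in>?C. \<Prod>j\<in>{1..N}. cw n q j (Y j) * G j (Y j))"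
    by (rule sum.reindex_bij_witness[of _ tr' "tr N n"])
       (auto simp: tr'_def tr_def samples_def PiE_def extensional_def fun_eq_iff)
  also have "\<dots> = (\<Prod>j\<in>{1..N}. Ec n q j (G j))"
    unfolding Ec_def by (subst prod_sum_PiE) (auto intro!: finite_PiE)
  finally show ?thesis .
qed

lemma Ec_prod:
  "Ec n q j (\<lambda>c. \<Prod>l\<in>{1..n}. h l (c l)) = (\<Prod>l\<in>{1..n}. q j * h l True + (1 - q j) * h l False)"
proof -
  have "(\<Prod>l\<in>{1..n}. q j * h l True + (1 - q j) * h l False)
     = (\<Prod>l\<in>{1..n}. \<Sum>b\<in>(UNIV::bool set). (if b then q j else 1 - q j) * h l b)"
    by (simp add: UNIV_bool add.commute)
  also have "\<dots> = (\<Sum>c\<in>PiE {1..n} (\<lambda>_. UNIV). \<Prod>l\<in>{1..n}. (if c l then q j else 1 - q j) * h l (c l))"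
    by (rule prod_sum_PiE) auto
  also have "\<dots> = Ec n q j (\<lambda>c. \<Prod>l\<in>{1..n}. h l (c l))"
    unfolding Ec_def cw_def by (simp add: prod.distrib)
  finally show ?thesis ..
qed


definition mom :: "(nat \<Rightarrow> real) \<Rightarrow> (bool \<Rightarrow> real) \<Rightarrow> nat \<Rightarrow> real" where
  "mom q f j = q j * f True + (1 - q j) * f False"

lemma Ew_cong: "(\<And>X. X \<in> samples N n \<Longrightarrow> f X = g X) \<Longrightarrow> Ew N n q f = Ew N n q g"
  unfolding Ew_def by (intro sum.cong) auto

lemma tr_app: "j \<in> {1..N} \<Longrightarrow> l \<in> {1..n} \<Longrightarrow> tr N n X j l = X l j"
  by (simp add: tr_def)

lemma Ew_flat:
  "Ew N n q (\<lambda>X. \<Prod>j\<in>{1..N}. \<Prod>l\<in>{1..n}. h l j (X l j))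
     = (\<Prod>j\<in>{1..N}. \<Prod>l\<in>{1..n}. mom q (h l j) j)"
proof -
  have "Ew N n q (\<lambda>X. \<Prod>j\<in>{1..N}. \<Prod>l\<in>{1..n}. h l j (X l j))
      = Ew N n q (\<lambda>X. \<Prod>j\<in>{1..N}. (\<lambda>j c. \<Prod>l\<in>{1..n}. h l j (c l)) j (tr N n X j))"
    by (intro Ew_cong prod.cong refl) (simp add: tr_app)
  also have "\<dots> = (\<Prod>j\<in>{1..N}. Ec n q j (\<lambda>c. \<Prod>l\<in>{1..n}. h l j (c l)))"
    by (rule Ew_col)
  also have "\<dots> = (\<Prod>j\<in>{1..N}. \<Prod>l\<in>{1..n}. mom q (h l j) j)"
    unfolding mom_def by (rule prod.cong[OF refl], rule Ec_prod)
  finally show ?thesis .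
qed

lemma prod_delta2:
  fixes a b n N :: nat
  assumes "a \<in> {1..n}" "b \<in> {1..N}"
  shows "(\<Prod>j\<in>{1..N}. \<Prod>l\<in>{1..n}. if l = a \<and> j = b then f l j else (1::real)) = f a b"
proof -
  have "(\<Prod>j\<in>{1..N}. \<Prod>l\<in>{1..n}. if l = a \<and> j = b then f l j else (1::real))
      = (\<Prod>j\<in>{1..N}. if j = b then f a b else 1)"
  proof (intro prod.cong refl)
    fix j show "(\<Prod>l\<in>{1..n}. if l = a \<and> j = b then f l j else (1::real)) = (if j = b then f a b else 1)"
    proof (cases "j = b")
      case True
      have "(\<Prod>l\<in>{1..n}. if l = a \<and> j = b then f l j else (1::real)) = (\<Prod>l\<in>{1..n}. if l = a then f l j else 1)"
        using True by simp
      also have "\<dots> = f a j" using assms(1) by (subst prod.delta) auto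
      finally show ?thesis using True by simp
    qed simp
  qed
  also have "\<dots> = f a b" using assms by (simp add: prod.delta)
  finally show ?thesis .
qed

lemma Ew_pair:
  assumes "l0 \<in> {1..n}" "j0 \<in> {1..N}" "l1 \<in> {1..n}" "j1 \<in> {1..N}"
  shows "Ew N n q (\<lambda>X. f (X l0 j0) * g (X l1 j1)) =
     (if l0 = l1 \<and> j0 = j1 then mom q (\<lambda>b. f b * g b) j0 else mom q f j0 * mom q g j1)"
proof (cases "l0 = l1 \<and> j0 = j1")
  case True
  have "Ew N n q (\<lambda>X. f (X l0 j0) * g (X l1 j1)) =
     Ew N n q (\<lambda>X. \<Prod>j\<in>{1..N}. \<Prod>l\<in>{1..n}. (\<lambda>l j b. if l = l0 \<and> j = j0 then f b * g b else 1) l j (X l j))"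
    using True assms by (intro Ew_cong) (subst prod_delta2, auto)
  also have "\<dots> = (\<Prod>j\<in>{1..N}. \<Prod>l\<in>{1..n}. if l = l0 \<and> j = j0 then mom q (\<lambda>b. f b * g b) j else 1)"
    using Ew_flat[of N n q "\<lambda>l j b. if l = l0 \<and> j = j0 then f b * g b else 1"]
    by (simp add: mom_def if_distrib cong: if_cong)
  also have "\<dots> = mom q (\<lambda>b. f b * g b) j0"
    using assms by (subst prod_delta2) auto
  finally show ?thesis using True by simp
next
  case False
  have "Ew N n q (\<lambda>X. f (X l0 j0) * g (X l1 j1)) =
     Ew N n q (\<lambda>X. \<Prod>j\<in>{1..N}. \<Prod>l\<in>{1..n}. (\<lambda>l j b. (if l = l0 \<and> j = j0 then f b else 1) *
        (if l = l1 \<and> j = j1 then g b else 1)) l j (X l j))"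
  proof (intro Ew_cong)
    fix X
    have "(\<Prod>j\<in>{1..N}. \<Prod>l\<in>{1..n}. (if l = l0 \<and> j = j0 then f (X l j) else 1) *
        (if l = l1 \<and> j = j1 then g (X l j) else 1)) = (\<Prod>j\<in>{1..N}. \<Prod>l\<in>{1..n}. (if l = l0 \<and> j = j0 then f (X l j) else 1)) *
        (\<Prod>j\<in>{1..N}. \<Prod>l\<in>{1..n}. (if l = l1 \<and> j = j1 then g (X l j) else 1))"
      by (simp only: prod.distrib)
    also have "\<dots> = f (X l0 j0) * g (X l1 j1)"
      using prod_delta2[OF assms(1,2), of "\<lambda>l j. f (X l j)"] prod_delta2[OF assms(3,4), of "\<lambda>l j. g (X l j)"] by simp
    finally show "f (X l0 j0) * g (X l1 j1) = (\<Prod>j\<in>{1..N}. \<Prod>l\<in>{1..n}. (\<lambda>l j b. (if l = l0 \<and> j = j0 then f b else 1) *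
        (if l = l1 \<and> j = j1 then g b else 1)) l j (X l j))" by simp
  qed
  also have "\<dots> = (\<Prod>j\<in>{1..N}. \<Prod>l\<in>{1..n}. (if l = l0 \<and> j = j0 then mom q f j else 1) *
        (if l = l1 \<and> j = j1 then mom q g j else 1))"
    using Ew_flat[of N n q "\<lambda>l j b. (if l = l0 \<and> j = j0 then f b else 1) *
        (if l = l1 \<and> j = j1 then g b else 1)"] False
    by (simp add: mom_def) (intro prod.cong refl, auto simp: mom_def algebra_simps)
  also have "\<dots> = mom q f j0 * mom q g j1"
    by (simp only: prod.distrib prod_delta2[OF assms(1,2), of "\<lambda>l j. mom q f j"]
       prod_delta2[OF assms(3,4), of "\<lambda>l j. mom q g j"])
  finally show ?thesis by (subst if_not_P[OF False])
qed

lemma Ew_one: "Ew N n q (\<lambda>X. 1) = 1"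
  using Ew_flat[of N n q "\<lambda>l j b. 1"] by (simp add: mom_def)

lemma Ew_single:
  assumes "l0 \<in> {1..n}" "j0 \<in> {1..N}"
  shows "Ew N n q (\<lambda>X. f (X l0 j0)) = mom q f j0"
  using Ew_pair[OF assms assms, where f=f and g="\<lambda>_. 1" and q=q] by (simp add: mom_def)

lemma Ew_add: "Ew N n q (\<lambda>X. f X + g X) = Ew N n q f + Ew N n q g"
  unfolding Ew_def by (simp add: distrib_left sum.distrib)
lemma Ew_cmult: "Ew N n q (\<lambda>X. c * f X) = c * Ew N n q f"
  unfolding Ew_def by (simp add: sum_distrib_left ac_simps)
lemma Ew_sum: "Ew N n q (\<lambda>X. \<Sum>i\<in>S. f i X) = (\<Sum>i\<in>S. Ew N n q (f i))"
  unfolding Ew_def by (simp add: sum_distrib_left sum.swap[of _ S])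

lemma sw_nonneg: "(\<forall>j\<in>{1..N}. 0 \<le> q j \<and> q j \<le> 1) \<Longrightarrow> 0 \<le> sample_weight N n q X"
  unfolding sample_weight_def by (intro prod_nonneg) auto

lemma Ew_mono: "(\<forall>j\<in>{1..N}. 0 \<le> q j \<and> q j \<le> 1) \<Longrightarrow> (\<And>X. X \<in> samples N n \<Longrightarrow> f X \<le> g X)
  \<Longrightarrow> Ew N n q f \<le> Ew N n q g"
  unfolding Ew_def by (intro sum_mono mult_left_mono) (auto intro: sw_nonneg)


abbreviation (input) ind :: "bool \<Rightarrow> real" where "ind b \<equiv> (if b then 1 else 0)"

lemma cnt_sum: "real (cnt n X j) = (\<Sum>l\<in>{1..n}. ind (X l j))"
  unfolding cnt_def by (simp add: sum.If_cases Int_def)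

lemma Pq_mono:
  assumes "\<forall>j\<in>{1..N}. 0 \<le> q j \<and> q j \<le> 1" "\<And>X. X \<in> samples N n \<Longrightarrow> E X \<Longrightarrow> F X"
  shows "Pq N n q E \<le> Pq N n q F"
  unfolding Pq_Ew using assms by (intro Ew_mono) auto

lemma Pq_union:
  assumes "\<forall>j\<in>{1..N}. 0 \<le> q j \<and> q j \<le> 1"
  shows "Pq N n q (\<lambda>X. E X \<or> F X) \<le> Pq N n q E + Pq N n q F"
  unfolding Pq_Ew Ew_add[symmetric] using assms by (intro Ew_mono) auto

lemma Markov:
  assumes "\<forall>j\<in>{1..N}. 0 \<le> q j \<and> q j \<le> 1" "\<And>X. X \<in> samples N n \<Longrightarrow> 0 \<le> f X" "a > 0"
  shows "Pq N n q (\<lambda>X. f X \<ge> a) \<le> Ew N n q f / a"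
proof -
  have "Pq N n q (\<lambda>X. f X \<ge> a) \<le> Ew N n q (\<lambda>X. (1/a) * f X)"
    unfolding Pq_Ew
  proof (rule Ew_mono[OF assms(1)])
    fix X assume X: "X \<in> samples N n"
    show "(if f X \<ge> a then 1 else 0) \<le> (1/a) * f X"
    proof (cases "f X \<ge> a")
      case True then show ?thesis using assms(3) by (simp add: field_simps)
    next
      case False then show ?thesis using assms(2,3) X by simp
    qed
  qed
  also have "\<dots> = (1/a) * Ew N n q f" by (rule Ew_cmult)
  finally show ?thesis by simp
qed

lemma Markov0:
  assumes "\<forall>j\<in>{1..N}. 0 \<le> q j \<and> q j \<le> 1" "\<And>X. X \<in> samples N n \<Longrightarrow> 0 \<le> f X" "Ew N n q f \<le> 0"
  shows "Pq N n q (\<lambda>X. f X > 0) \<le> 0"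
proof -
  have fin: "finite (samples N n)" unfolding samples_def by (intro finite_PiE) auto
  have nn: "\<And>X. X \<in> samples N n \<Longrightarrow> 0 \<le> sample_weight N n q X * f X"
    by (rule mult_nonneg_nonneg[OF sw_nonneg[OF assms(1)] assms(2)])
  have "Ew N n q f \<ge> 0" unfolding Ew_def using nn by (rule sum_nonneg)
  then have "(\<Sum>X\<in>samples N n. sample_weight N n q X * f X) = 0" using assms(3) unfolding Ew_def by linarith
  then have z: "\<And>X. X \<in> samples N n \<Longrightarrow> sample_weight N n q X * f X = 0"
  proof -
    fix X assume X: "X \<in> samples N n"
    from sum_nonneg_eq_0_iff[OF fin, of "\<lambda>X. sample_weight N n q X * f X"] nn \<open>(\<Sum>X\<in>samples N n. sample_weight N n q X * f X) = 0\<close>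
    show "sample_weight N n q X * f X = 0" using X by simp
  qed
  have "\<And>X. X \<in> samples N n \<Longrightarrow> (if f X > 0 then sample_weight N n q X else 0) = 0"
  proof -
    fix X assume X: "X \<in> samples N n"
    show "(if f X > 0 then sample_weight N n q X else 0) = 0"
      using z[OF X] by (cases "f X > 0") simp_all
  qed
  then have "Pq N n q (\<lambda>X. f X > 0) = 0"
    unfolding Pq_def by (rule sum.neutral[OF ballI])
  then show ?thesis by simp
qed

lemma mom_centered: "mom q (\<lambda>b. ind b - q j) j = 0"
  by (simp add: mom_def algebra_simps)
lemma mom_centered2: "mom q (\<lambda>b. (ind b - q j) * (ind b - q j)) j = q j * (1 - q j)"
  by (simp add: mom_def algebra_simps)

lemma variance:
  assumes T: "T \<subseteq> {1..N}" and n: "n \<ge> 1"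
  shows "Ew N n q (\<lambda>X. (\<Sum>j\<in>T. real (cnt n X j) / n - q j)\<^sup>2) = (\<Sum>j\<in>T. q j * (1 - q j)) / n"
proof -
  have finT: "finite T" using T finite_subset by blast
  define y where "y = (\<lambda>j l (X::nat\<Rightarrow>nat\<Rightarrow>bool). ind (X l j) - q j)"
  have e1: "(\<Sum>j\<in>T. real (cnt n X j) / n - q j) = (1/real n) * (\<Sum>j\<in>T. \<Sum>l\<in>{1..n}. y j l X)" for X
    using n by (simp add: cnt_sum y_def sum_subtractf sum_distrib_left field_simps sum_divide_distrib)
  have e2: "(\<Sum>j\<in>T. real (cnt n X j) / n - q j)\<^sup>2 =
     (1/real n)^2 * (\<Sum>j\<in>T. \<Sum>j'\<in>T. \<Sum>l\<in>{1..n}. \<Sum>l'\<in>{1..n}. y j l X * y j' l' X)" for X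
  proof -
    have "(\<Sum>j\<in>T. \<Sum>l\<in>{1..n}. y j l X) * (\<Sum>j\<in>T. \<Sum>l\<in>{1..n}. y j l X) =
      (\<Sum>j\<in>T. \<Sum>j'\<in>T. \<Sum>l\<in>{1..n}. \<Sum>l'\<in>{1..n}. y j l X * y j' l' X)"
      by (simp only: sum_product)
    then show ?thesis unfolding e1 power_mult_distrib by (simp only: power2_eq_square)
  qed
  have pair: "Ew N n q (\<lambda>X. y j l X * y j' l' X) = (if l = l' \<and> j = j' then q j * (1 - q j) else 0)"
    if "j \<in> T" "j' \<in> T" "l \<in> {1..n}" "l' \<in> {1..n}" for j l j' l'
  proof -
    have "Ew N n q (\<lambda>X. y j l X * y j' l' X) = Ew N n q (\<lambda>X. (\<lambda>b. ind b - q j) (X l j) * (\<lambda>b. ind b - q j') (X l' j'))"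
      by (simp add: y_def)
    also have "\<dots> = (if l = l' \<and> j = j' then q j * (1 - q j) else 0)"
      using that T by (subst Ew_pair) (auto simp: mom_centered mom_centered2)
    finally show ?thesis .
  qed
  have "Ew N n q (\<lambda>X. (\<Sum>j\<in>T. real (cnt n X j) / n - q j)\<^sup>2) =
     (1/real n)^2 * (\<Sum>j\<in>T. \<Sum>j'\<in>T. \<Sum>l\<in>{1..n}. \<Sum>l'\<in>{1..n}. Ew N n q (\<lambda>X. y j l X * y j' l' X))"
    unfolding e2 Ew_cmult by (simp add: Ew_sum)
  also have "\<dots> = (1/real n)^2 * (\<Sum>j\<in>T. \<Sum>j'\<in>T. \<Sum>l\<in>{1..n}. \<Sum>l'\<in>{1..n}.
        (if l = l' \<and> j = j' then q j * (1 - q j) else 0))"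
    by (intro arg_cong[where f="(*) _"] sum.cong refl) (simp add: pair)
  also have "\<dots> = (1/real n)^2 * (\<Sum>j\<in>T. \<Sum>l\<in>{1..n}. q j * (1 - q j))"
  proof -
    have "(\<Sum>j'\<in>T. \<Sum>l\<in>{1..n}. \<Sum>l'\<in>{1..n}. (if l = l' \<and> j = j' then q j * (1 - q j) else 0)) = (\<Sum>l\<in>{1..n}. q j * (1 - q j))"
      if "j \<in> T" for j
    proof -
      have "(\<Sum>j'\<in>T. \<Sum>l\<in>{1..n}. \<Sum>l'\<in>{1..n}. (if l = l' \<and> j = j' then q j * (1 - q j) else 0))
          = (\<Sum>j'\<in>T. if j = j' then (\<Sum>l\<in>{1..n}. q j * (1 - q j)) else 0)"
        by (intro sum.cong refl) (auto simp: sum.delta)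
      also have "\<dots> = (\<Sum>l\<in>{1..n}. q j * (1 - q j))" using that finT by (simp add: sum.delta)
      finally show ?thesis .
    qed
    then show ?thesis by simp
  qed
  also have "\<dots> = (\<Sum>j\<in>T. q j * (1 - q j)) / n"
  proof -
    have "(\<Sum>j\<in>T. \<Sum>l\<in>{1..n}. q j * (1 - q j)) = real n * (\<Sum>j\<in>T. q j * (1 - q j))"
      by (simp add: sum_distrib_left)
    then show ?thesis using n by (simp add: power2_eq_square)
  qed
  finally show ?thesis .
qed


lemma cnt2:
  assumes j: "j \<in> {1..N}"
  shows "Ew N n q (\<lambda>X. real (cnt n X j) * (real (cnt n X j) - 1)) = real n * (real n - 1) * (q j)\<^sup>2"
proof -
  have e: "real (cnt n X j) * (real (cnt n X j) - 1) =
     (\<Sum>l\<in>{1..n}. \<Sum>l'\<in>{1..n}. ind (X l j) * ind (X l' j)) - (\<Sum>l\<in>{1..n}. ind (X l j))" for X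
    unfolding cnt_sum by (simp add: sum_product algebra_simps)
  have p: "Ew N n q (\<lambda>X. ind (X l j) * ind (X l' j)) = (q j)\<^sup>2 + (if l = l' then q j - (q j)\<^sup>2 else 0)"
    if "l \<in> {1..n}" "l' \<in> {1..n}" for l l'
    using that j by (subst Ew_pair[where f=ind and g=ind]) (auto simp: mom_def power2_eq_square)
  have s: "Ew N n q (\<lambda>X. ind (X l j)) = q j" if "l \<in> {1..n}" for l
    using that j by (subst Ew_single) (auto simp: mom_def)
  have "Ew N n q (\<lambda>X. real (cnt n X j) * (real (cnt n X j) - 1)) =
     (\<Sum>l\<in>{1..n}. \<Sum>l'\<in>{1..n}. Ew N n q (\<lambda>X. ind (X l j) * ind (X l' j))) - (\<Sum>l\<in>{1..n}. Ew N n q (\<lambda>X. ind (X l j)))"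
    unfolding e by (simp add: Ew_sum Ew_add[where g="\<lambda>X. - _ X", simplified] Ew_cmult[where c="-1", simplified])
  also have "\<dots> = (\<Sum>l\<in>{1..n}. \<Sum>l'\<in>{1..n}. (q j)\<^sup>2 + (if l = l' then q j - (q j)\<^sup>2 else 0)) - (\<Sum>l\<in>{1..n}. q j)"
    by (simp add: p s)
  also have "\<dots> = real n * (real n - 1) * (q j)\<^sup>2"
    by (simp add: sum.distrib sum.delta algebra_simps power2_eq_square)
  finally show ?thesis .
qed

lemma psi2_bound:
  assumes q: "\<forall>j\<in>{1..N}. 0 \<le> q j \<and> q j \<le> 1"
  shows "Pq N n q (psi2 A N n) \<le> real n ^ 2 / 2 * (\<Sum>j\<in>{A<..N}. (q j)\<^sup>2)"
proof -
  let ?f = "\<lambda>X. (\<Sum>j\<in>{A<..N}. real (cnt n X j) * (real (cnt n X j) - 1) / 2)"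
  have nn: "0 \<le> real k * (real k - 1)" for k :: nat by (cases k) auto
  have "Pq N n q (psi2 A N n) \<le> Ew N n q ?f"
    unfolding Pq_Ew
  proof (rule Ew_mono[OF q])
    fix X assume X: "X \<in> samples N n"
    show "(if psi2 A N n X then 1 else 0) \<le> ?f X"
    proof (cases "psi2 A N n X")
      case True
      then obtain j where j: "j \<in> {A<..N}" "cnt n X j \<ge> 2" unfolding psi2_def by auto
      have "1 \<le> real (cnt n X j) * (real (cnt n X j) - 1) / 2"
      proof -
        have "real (cnt n X j) \<ge> 2" using j by simp
        then have "2 * 1 \<le> real (cnt n X j) * (real (cnt n X j) - 1)"
          by (intro mult_mono) auto
        then show ?thesis by simp
      qed
      also have "\<dots> \<le> ?f X"
        using j nn by (intro member_le_sum) auto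
      finally show ?thesis using True by simp
    next
      case False then show ?thesis using nn by (simp add: sum_nonneg)
    qed
  qed
  also have "Ew N n q ?f = (\<Sum>j\<in>{A<..N}. real n * (real n - 1) * (q j)\<^sup>2 / 2)"
    unfolding Ew_sum
  proof (intro sum.cong refl)
    fix j assume "j \<in> {A<..N}"
    then have j: "j \<in> {1..N}" by auto
    have "Ew N n q (\<lambda>X. real (cnt n X j) * (real (cnt n X j) - 1) / 2)
       = Ew N n q (\<lambda>X. (1/2) * (real (cnt n X j) * (real (cnt n X j) - 1)))" by simp
    also have "\<dots> = (1/2) * Ew N n q (\<lambda>X. real (cnt n X j) * (real (cnt n X j) - 1))" by (rule Ew_cmult)
    also have "\<dots> = real n * (real n - 1) * (q j)\<^sup>2 / 2" using cnt2[OF j] by simp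
    finally show "Ew N n q (\<lambda>X. real (cnt n X j) * (real (cnt n X j) - 1) / 2) = real n * (real n - 1) * (q j)\<^sup>2 / 2" .
  qed
  also have "\<dots> \<le> (\<Sum>j\<in>{A<..N}. real n ^ 2 / 2 * (q j)\<^sup>2)"
    by (intro sum_mono) (auto simp: power2_eq_square field_simps mult_right_mono)
  also have "\<dots> = real n ^ 2 / 2 * (\<Sum>j\<in>{A<..N}. (q j)\<^sup>2)" by (simp add: sum_distrib_left)
  finally show ?thesis .
qed


lemma Ec_add: "Ec n q j (\<lambda>c. f c + g c) = Ec n q j f + Ec n q j g"
  unfolding Ec_def by (simp add: distrib_left sum.distrib)
lemma Ec_diff: "Ec n q j (\<lambda>c. f c - g c) = Ec n q j f - Ec n q j g"
  unfolding Ec_def by (simp add: right_diff_distrib sum_subtractf)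

lemma prod_ind: "finite J \<Longrightarrow> (\<Prod>j\<in>J. ind (P j)) = ind (\<forall>j\<in>J. P j)"
  by (induction J rule: finite_induct) auto

lemma prod_split_half:
  fixes a b :: real
  assumes "n = 2 * m"
  shows "(\<Prod>l\<in>{1..n}. if l \<le> m then a else b) = a ^ m * b ^ m"
proof -
  have u: "{1..n} = {1..m} \<union> {m<..n}" using assms by auto
  have "(\<Prod>l\<in>{1..n}. if l \<le> m then a else b) = (\<Prod>l\<in>{1..m}. if l \<le> m then a else b) * (\<Prod>l\<in>{m<..n}. if l \<le> m then a else b)"
    unfolding u by (rule prod.union_disjoint) auto
  also have "\<dots> = (\<Prod>l\<in>{1..m}. a) * (\<Prod>l\<in>{m<..n}. b)"
    by (intro arg_cong2[where f="(*)"] prod.cong) auto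
  also have "\<dots> = a ^ m * b ^ m" using assms by simp
  finally show ?thesis .
qed

lemma half_col:
  assumes nm: "n = 2 * m"
  shows "Ec n q j (\<lambda>c. ind (\<not> ((\<exists>l\<in>{1..m}. c l) \<and> (\<exists>l\<in>{m<..n}. c l))))
     = 2 * (1 - q j) ^ m - (1 - q j) ^ n"
proof -
  define ha where "ha = (\<lambda>l b. ind (l \<le> m \<longrightarrow> \<not> b))"
  define hb where "hb = (\<lambda>l b. ind (m < l \<longrightarrow> \<not> b))"
  define hc where "hc = (\<lambda>(l::nat) b. ind (\<not> b))"
  have pt: "ind (\<not> ((\<exists>l\<in>{1..m}. c l) \<and> (\<exists>l\<in>{m<..n}. c l))) =
     (\<Prod>l\<in>{1..n}. ha l (c l)) + (\<Prod>l\<in>{1..n}. hb l (c l)) - (\<Prod>l\<in>{1..n}. hc l (c l))" for c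
  proof -
    have a: "(\<Prod>l\<in>{1..n}. ha l (c l)) = ind (\<not> (\<exists>l\<in>{1..m}. c l))"
      unfolding ha_def using nm by (subst prod_ind) auto
    have b: "(\<Prod>l\<in>{1..n}. hb l (c l)) = ind (\<not> (\<exists>l\<in>{m<..n}. c l))"
      unfolding hb_def using nm by (subst prod_ind) auto
    have cc: "(\<Prod>l\<in>{1..n}. hc l (c l)) = ind (\<not> (\<exists>l\<in>{1..m}. c l) \<and> \<not> (\<exists>l\<in>{m<..n}. c l))"
      unfolding hc_def using nm by (subst prod_ind) (auto, (metis atLeastAtMost_iff greaterThanAtMost_iff not_less)+)
    show ?thesis unfolding a b cc by auto
  qed
  have "Ec n q j (\<lambda>c. ind (\<not> ((\<exists>l\<in>{1..m}. c l) \<and> (\<exists>l\<in>{m<..n}. c l)))) =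
     Ec n q j (\<lambda>c. \<Prod>l\<in>{1..n}. ha l (c l)) + Ec n q j (\<lambda>c. \<Prod>l\<in>{1..n}. hb l (c l)) - Ec n q j (\<lambda>c. \<Prod>l\<in>{1..n}. hc l (c l))"
    unfolding pt by (simp only: Ec_add Ec_diff)
  also have "\<dots> = (\<Prod>l\<in>{1..n}. if l \<le> m then 1 - q j else 1) + (\<Prod>l\<in>{1..n}. if l \<le> m then 1 else 1 - q j)
       - (\<Prod>l\<in>{1..n}. 1 - q j)"
    unfolding Ec_prod unfolding ha_def hb_def hc_def
    by (intro arg_cong2[where f="(-)"] arg_cong2[where f="(+)"] prod.cong refl) auto
  also have "\<dots> = 2 * (1 - q j) ^ m - (1 - q j) ^ n"
    unfolding prod_split_half[OF nm] using nm by simp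
  finally show ?thesis .
qed

lemma noE_prod:
  assumes nm: "n = 2 * m"
  shows "Pq N n q (\<lambda>X. \<forall>j\<in>{A<..N}. \<not> ((\<exists>l\<in>{1..m}. X l j) \<and> (\<exists>l\<in>{m<..n}. X l j)))
     = (\<Prod>j\<in>{A<..N}. 2 * (1 - q j) ^ m - (1 - q j) ^ n)"
proof -
  define G where "G = (\<lambda>j c. if j \<in> {A<..N} then ind (\<not> ((\<exists>l\<in>{1..m}. c l) \<and> (\<exists>l\<in>{m<..n}. c l))) else 1)"
  have "Pq N n q (\<lambda>X. \<forall>j\<in>{A<..N}. \<not> ((\<exists>l\<in>{1..m}. X l j) \<and> (\<exists>l\<in>{m<..n}. X l j)))
     = Ew N n q (\<lambda>X. \<Prod>j\<in>{1..N}. G j (tr N n X j))"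
    unfolding Pq_Ew
  proof (rule Ew_cong)
    fix X
    have "(\<Prod>j\<in>{1..N}. G j (tr N n X j)) = (\<Prod>j\<in>{1..N}. ind (j \<in> {A<..N} \<longrightarrow> \<not> ((\<exists>l\<in>{1..m}. X l j) \<and> (\<exists>l\<in>{m<..n}. X l j))))"
      unfolding G_def using nm by (intro prod.cong refl) (auto simp: tr_def)
    also have "\<dots> = ind (\<forall>j\<in>{A<..N}. \<not> ((\<exists>l\<in>{1..m}. X l j) \<and> (\<exists>l\<in>{m<..n}. X l j)))"
      by (subst prod_ind) auto
    finally show "ind (\<forall>j\<in>{A<..N}. \<not> ((\<exists>l\<in>{1..m}. X l j) \<and> (\<exists>l\<in>{m<..n}. X l j))) = (\<Prod>j\<in>{1..N}. G j (tr N n X j))" by simp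
  qed
  also have "\<dots> = (\<Prod>j\<in>{1..N}. Ec n q j (G j))" by (rule Ew_col)
  also have "\<dots> = (\<Prod>j\<in>{1..N}. if j \<in> {A<..N} then 2 * (1 - q j) ^ m - (1 - q j) ^ n else 1)"
  proof (intro prod.cong refl)
    fix j
    have one: "Ec n q j (\<lambda>c. 1) = 1"
      using Ec_prod[of n q j "\<lambda>l b. 1"] by simp
    show "Ec n q j (G j) = (if j \<in> {A<..N} then 2 * (1 - q j) ^ m - (1 - q j) ^ n else 1)"
      unfolding G_def using half_col[OF nm] one by auto
  qed
  also have "\<dots> = (\<Prod>j\<in>{A<..N}. 2 * (1 - q j) ^ m - (1 - q j) ^ n)"
  proof -
    have s: "{1..N} \<inter> {A<..N} = {A<..N}" by auto
    show ?thesis by (subst prod.inter_restrict[symmetric]) (simp, simp only: s)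
  qed
  finally show ?thesis .
qed


lemma I_prop:
  assumes "0 \<le> cI"
  shows "I_idx cI N n p \<le> N \<and> (\<Sum>i\<in>{I_idx cI N n p<..N}. (p i)\<^sup>2) \<le> cI / (real n)\<^sup>2"
proof -
  have ex: "\<exists>J. J \<le> N \<and> (\<Sum>i\<in>{J<..N}. (p i)\<^sup>2) \<le> cI / (real n)\<^sup>2"
    using assms by (intro exI[of _ N]) auto
  show ?thesis unfolding I_idx_def by (rule LeastI_ex[OF ex])
qed

lemma A_prop:
  fixes t cI cA :: real and N n :: nat and p :: "nat \<Rightarrow> real"
  defines "I \<equiv> I_idx cI N n p"
  defines "A \<equiv> A_idx t cI cA N n p"
  shows "A \<le> I \<and> (\<forall>j\<in>{A<..I}. pow0 (p j) (b_of t / 2)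
               < cA / (sqrt (real n) * (\<Sum>i\<in>{1..I}. p i powr r_of t) powr (1/4)))"
proof -
  define S where "S = {a\<in>{1..I}. pow0 (p a) (b_of t / 2)
               \<ge> cA / (sqrt (real n) * (\<Sum>i\<in>{1..I}. p i powr r_of t) powr (1/4))}"
  have A: "A = (if S = {} then 0 else Max S)"
    unfolding A_def A_idx_def Let_def S_def I_def by simp
  have fin: "finite S" unfolding S_def by auto
  have nS: "pow0 (p j) (b_of t / 2)
               < cA / (sqrt (real n) * (\<Sum>i\<in>{1..I}. p i powr r_of t) powr (1/4))"
    if "j \<in> {1..I}" "j \<notin> S" for j
    using that unfolding S_def by auto
  have "A \<le> I \<and> (\<forall>j\<in>{A<..I}. j \<notin> S)"
  proof (cases "S = {}")
    case True
    then show ?thesis unfolding A by auto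
  next
    case False
    have "Max S \<in> S" using Max_in[OF fin False] .
    then have "Max S \<le> I" unfolding S_def by auto
    moreover have "j \<notin> S" if "Max S < j" for j
    proof
      assume "j \<in> S"
      then have "j \<le> Max S" by (rule Max_ge[OF fin])
      with that show False by simp
    qed
    ultimately show ?thesis using False unfolding A by auto
  qed
  then show ?thesis using nS by auto
qed

lemma rb_sum: "1 \<le> t \<Longrightarrow> t \<le> 2 \<Longrightarrow> 2 * b_of t + r_of t = 2"
proof -
  assume "1 \<le> t" "t \<le> 2"
  then have nz: "4 - t \<noteq> 0" by simp
  have "2 * b_of t + r_of t = (2 * (4 - 2 * t) + 2 * t) / (4 - t)"
    unfolding b_of_def r_of_def by argo
  also have "\<dots> = 2 * (4 - t) / (4 - t)" by (simp add: algebra_simps)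
  also have "\<dots> = 2" using nz by (rule nonzero_mult_div_cancel_right)
  finally show ?thesis .
qed
lemma r_pos: "1 \<le> t \<Longrightarrow> t \<le> 2 \<Longrightarrow> 0 < r_of t"
  unfolding r_of_def by simp
lemma b_nonneg: "1 \<le> t \<Longrightarrow> t \<le> 2 \<Longrightarrow> 0 \<le> b_of t"
  unfolding b_of_def by simp

lemma pow_step:
  fixes x thr R cA :: real
  assumes x: "0 < x" and tt: "1 \<le> t" "t \<le> 2" and R: "0 < R" and n: "0 < n"
    and lt: "x powr (b_of t / 2) < cA / (sqrt n * R powr (1/4))"
  shows "x\<^sup>2 \<le> cA ^ 4 / (n\<^sup>2 * R) * x powr r_of t"
proof -
  have y0: "0 < x powr (b_of t / 2)" using x by simp
  have "(x powr (b_of t / 2)) ^ 4 \<le> (cA / (sqrt n * R powr (1/4))) ^ 4"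
    using lt y0 by (intro power_mono) auto
  also have "(cA / (sqrt n * R powr (1/4))) ^ 4 = cA ^ 4 / (n\<^sup>2 * R)"
  proof -
    have e: "(4::nat) = 2*2" by simp
    have "(sqrt n) ^ 4 = ((sqrt n)\<^sup>2)\<^sup>2" unfolding e by (rule power_mult)
    also have "\<dots> = n\<^sup>2" using n by simp
    finally have "(sqrt n) ^ 4 = n\<^sup>2" .
    moreover have "(R powr (1/4)) ^ 4 = R" using R by (subst powr_power) auto
    ultimately show ?thesis by (simp add: power_divide power_mult_distrib)
  qed
  also have "(x powr (b_of t / 2)) ^ 4 = x powr (2 * b_of t)"
    using x by (subst powr_power) auto
  finally have h: "x powr (2 * b_of t) \<le> cA ^ 4 / (n\<^sup>2 * R)" .
  have "x\<^sup>2 = x powr (2 * b_of t + r_of t)" unfolding rb_sum[OF tt] using x by (subst powr_numeral) auto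
  also have "\<dots> = x powr (2 * b_of t) * x powr r_of t" by (simp add: powr_add)
  also have "\<dots> \<le> cA ^ 4 / (n\<^sup>2 * R) * x powr r_of t"
    using h by (intro mult_right_mono) auto
  finally show ?thesis .
qed

lemma pow0_nonneg: "0 \<le> x \<Longrightarrow> 0 \<le> pow0 x a"
  unfolding pow0_def by auto

lemma tail_sq:
  fixes t cI cA :: real and N n :: nat and p :: "nat \<Rightarrow> real"
  assumes p: "\<forall>j\<in>{1..N}. 0 \<le> p j" and tt: "1 \<le> t" "t \<le> 2"
    and cI: "0 \<le> cI" and cA: "0 < cA" and n: "1 \<le> n"
  shows "(\<Sum>i\<in>{A_idx t cI cA N n p<..N}. (p i)\<^sup>2) \<le> (cI + cA ^ 4) / (real n)\<^sup>2"
proof -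
  define I where "I = I_idx cI N n p"
  define A where "A = A_idx t cI cA N n p"
  define R where "R = (\<Sum>i\<in>{1..I}. p i powr r_of t)"
  define thr where "thr = cA / (sqrt (real n) * R powr (1/4))"
  have IN: "I \<le> N" and tailI: "(\<Sum>i\<in>{I<..N}. (p i)\<^sup>2) \<le> cI / (real n)\<^sup>2"
    using I_prop[OF cI, of N n p] unfolding I_def by auto
  have AI: "A \<le> I" and lt: "\<And>j. j \<in> {A<..I} \<Longrightarrow> pow0 (p j) (b_of t / 2) < thr"
    using A_prop[of t cI cA N n p] unfolding A_def I_def thr_def R_def by auto
  have mid: "(\<Sum>i\<in>{A<..I}. (p i)\<^sup>2) \<le> cA ^ 4 / (real n)\<^sup>2"
  proof (cases "{A<..I} = {}")
    case True then show ?thesis by simp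
  next
    case False
    then obtain j0 where j0: "j0 \<in> {A<..I}" by blast
    have "0 \<le> pow0 (p j0) (b_of t / 2)" using j0 IN p by (intro pow0_nonneg) auto
    then have thr0: "0 < thr" using lt[OF j0] by linarith
    have R0: "0 \<le> R" unfolding R_def by (intro sum_nonneg) auto
    have Rpos: "0 < R"
    proof (rule ccontr)
      assume "\<not> 0 < R"
      then have "R = 0" using R0 by simp
      then have "thr = 0" unfolding thr_def by simp
      then show False using thr0 by simp
    qed
    have each: "(p j)\<^sup>2 \<le> cA ^ 4 / ((real n)\<^sup>2 * R) * p j powr r_of t" if j: "j \<in> {A<..I}" for j
    proof -
      have pj: "0 \<le> p j" using j IN p by auto
      show ?thesis
      proof (cases "p j = 0")
        case True then show ?thesis by simp
      next
        case False
        then have pj': "0 < p j" using pj by simp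
        have "pow0 (p j) (b_of t / 2) = p j powr (b_of t / 2)"
          unfolding pow0_def using pj' by auto
        then have "p j powr (b_of t / 2) < cA / (sqrt (real n) * R powr (1/4))"
          using lt[OF j] unfolding thr_def by simp
        then show ?thesis using pow_step[OF pj' tt Rpos] n by simp
      qed
    qed
    have "(\<Sum>i\<in>{A<..I}. (p i)\<^sup>2) \<le> (\<Sum>i\<in>{A<..I}. cA ^ 4 / ((real n)\<^sup>2 * R) * p i powr r_of t)"
      using each by (rule sum_mono)
    also have "\<dots> = cA ^ 4 / ((real n)\<^sup>2 * R) * (\<Sum>i\<in>{A<..I}. p i powr r_of t)"
      by (simp add: sum_distrib_left)
    also have "\<dots> \<le> cA ^ 4 / ((real n)\<^sup>2 * R) * R"
      unfolding R_def using cA Rpos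
      by (intro mult_left_mono sum_mono2) (auto simp: R_def)
    also have "\<dots> = cA ^ 4 / (real n)\<^sup>2" using Rpos by simp
    finally show ?thesis .
  qed
  have u: "{A<..N} = {A<..I} \<union> {I<..N}" using AI IN by auto
  have "(\<Sum>i\<in>{A<..N}. (p i)\<^sup>2) = (\<Sum>i\<in>{A<..I}. (p i)\<^sup>2) + (\<Sum>i\<in>{I<..N}. (p i)\<^sup>2)"
    unfolding u by (rule sum.union_disjoint) auto
  also have "\<dots> \<le> cA ^ 4 / (real n)\<^sup>2 + cI / (real n)\<^sup>2" using mid tailI by linarith
  finally show ?thesis unfolding A_def by (simp add: add_divide_distrib add.commute)
qed


lemma young_t:
  fixes x lam t :: real
  assumes x: "0 \<le> x" and l: "0 < lam" and tt: "1 \<le> t" "t \<le> 2"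
  shows "x powr t \<le> lam powr (t - 1) * x + lam powr (t - 2) * x\<^sup>2"
proof (cases "x = 0")
  case True then show ?thesis using tt by simp
next
  case False
  then have xp: "0 < x" using x by simp
  define u where "u = lam powr (t - 1) * x"
  define v where "v = lam powr (t - 2) * x\<^sup>2"
  have up: "0 < u" unfolding u_def using xp l by simp
  have vp: "0 < v" unfolding v_def using xp l by simp
  have "u powr (2 - t) * v powr (t - 1) \<le> (2 - t) * u + (t - 1) * v"
    using tt up vp by (intro Youngs_inequality_0) auto
  also have "\<dots> \<le> u + v"
    using tt up vp by (intro add_mono) (auto simp: mult_left_le_one_le)
  also have "u powr (2 - t) * v powr (t - 1) = x powr t"
  proof -
    have "u powr (2 - t) = lam powr ((t - 1) * (2 - t)) * x powr (2 - t)"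
      unfolding u_def using xp l by (simp add: powr_mult powr_powr)
    moreover have "v powr (t - 1) = lam powr ((t - 2) * (t - 1)) * x powr (2 * (t - 1))"
    proof -
      have "(x\<^sup>2) powr (t - 1) = (x powr 2) powr (t - 1)" using xp by (subst powr_numeral) auto
      also have "\<dots> = x powr (2 * (t - 1))" by (rule powr_powr)
      finally have e: "(x\<^sup>2) powr (t - 1) = x powr (2 * (t - 1))" .
      have "v powr (t - 1) = (lam powr (t - 2)) powr (t - 1) * (x\<^sup>2) powr (t - 1)"
        unfolding v_def using xp l by (simp add: powr_mult)
      then show ?thesis unfolding e by (simp add: powr_powr)
    qed
    ultimately have "u powr (2 - t) * v powr (t - 1) =
       (lam powr ((t - 1) * (2 - t)) * lam powr ((t - 2) * (t - 1))) * (x powr (2 - t) * x powr (2 * (t - 1)))"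
      by simp
    also have "\<dots> = lam powr ((t - 1) * (2 - t) + (t - 2) * (t - 1)) * x powr ((2 - t) + 2 * (t - 1))"
      by (simp only: powr_add)
    also have "\<dots> = x powr t" using l by (simp add: algebra_simps)
    finally show ?thesis .
  qed
  finally show ?thesis unfolding u_def v_def .
qed

lemma one_minus_pow_exp:
  fixes q :: real assumes "0 \<le> q" "q \<le> 1"
  shows "(1 - q) ^ m \<le> exp (- (real m * q))"
proof -
  have "(1 - q) ^ m \<le> exp (- q) ^ m"
    using assms exp_ge_add_one_self[of "-q"] by (intro power_mono) auto
  also have "\<dots> = exp (- (real m * q))" by (simp add: exp_of_nat_mult[symmetric])
  finally show ?thesis .
qed

lemma one_minus_exp_ge:
  fixes x L :: real assumes "0 \<le> x" "x \<le> L"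
  shows "x * exp (- L) \<le> 1 - exp (- x)"
proof -
  have "x * exp (- L) \<le> x * exp (- x)" using assms by (intro mult_left_mono) auto
  also have "x * exp (- x) \<le> 1 - exp (- x)"
  proof -
    have "(1 + x) * exp (- x) \<le> exp x * exp (- x)"
      using exp_ge_add_one_self[of x] by (intro mult_right_mono) auto
    then show ?thesis by (simp add: algebra_simps exp_minus_inverse)
  qed
  finally show ?thesis .
qed

lemma exp_neg_le_inv: "0 < y \<Longrightarrow> exp (- y) \<le> 1 / (y::real)"
proof -
  assume y: "0 < y"
  have "y \<le> exp y" using exp_ge_add_one_self[of y] by linarith
  then have "y * exp (- y) \<le> exp y * exp (- y)" by (intro mult_right_mono) auto
  then have "y * exp (- y) \<le> 1" by (simp add: exp_minus_inverse)
  then show ?thesis using y by (simp add: field_simps)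
qed

lemma prod_bound:
  fixes \<eta> :: real and m n :: nat
  assumes eta: "0 < \<eta>" "\<eta> < 1" and nm: "n = 2 * m" and m: "1 \<le> m" and T: "finite T"
    and q: "\<forall>j\<in>T. 0 \<le> q j \<and> q j \<le> 1"
    and S: "8 / (\<eta> * exp (- (4/\<eta>)) ^ 2) / (real n)\<^sup>2 \<le> (\<Sum>j\<in>T. (q j)\<^sup>2)"
  shows "(\<Prod>j\<in>T. 2 * (1 - q j) ^ m - (1 - q j) ^ n) \<le> \<eta> / 2"
proof -
  define L where "L = 4 / \<eta>"
  define \<kappa> where "\<kappa> = exp (- L)"
  have Lp: "0 < L" unfolding L_def using eta by simp
  have kp: "0 < \<kappa>" unfolding \<kappa>_def by simp
  define a where "a = (\<lambda>j. (1 - q j) ^ m)"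
  have a01: "0 \<le> a j \<and> a j \<le> 1" if "j \<in> T" for j
    unfolding a_def using q that by (auto intro: power_le_one)
  have f_eq: "2 * (1 - q j) ^ m - (1 - q j) ^ n = 1 - (1 - a j)\<^sup>2" for j
  proof -
    have "(1 - q j) ^ n = (a j)\<^sup>2" unfolding a_def nm by (simp only: mult.commute[of 2 m] power_mult)
    then show ?thesis unfolding a_def by (simp add: power2_eq_square algebra_simps)
  qed
  have f01: "0 \<le> 1 - (1 - a j)\<^sup>2 \<and> 1 - (1 - a j)\<^sup>2 \<le> 1" if "j \<in> T" for j
    using a01[OF that] power_le_one[of "1 - a j" 2] by auto
  show ?thesis
  proof (cases "\<exists>j\<in>T. L \<le> real m * q j")
    case True
    then obtain j where j: "j \<in> T" "L \<le> real m * q j" by blast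
    have "(\<Prod>j\<in>T. 2 * (1 - q j) ^ m - (1 - q j) ^ n) = (\<Prod>j\<in>T. 1 - (1 - a j)\<^sup>2)"
      using f_eq by simp
    also have "\<dots> = (1 - (1 - a j)\<^sup>2) * (\<Prod>i\<in>T - {j}. 1 - (1 - a i)\<^sup>2)"
      using T j by (simp add: prod.remove)
    also have "\<dots> \<le> (1 - (1 - a j)\<^sup>2) * 1"
      using f01 j by (intro mult_left_mono prod_le_1) auto
    also have "\<dots> \<le> 2 * a j" using a01[OF j(1)] by (simp add: power2_eq_square algebra_simps)
    also have "\<dots> \<le> 2 * exp (- L)"
    proof -
      have "a j \<le> exp (- (real m * q j))" unfolding a_def using q j by (intro one_minus_pow_exp) auto
      also have "\<dots> \<le> exp (- L)" using j by simp
      finally show ?thesis by simp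
    qed
    also have "\<dots> \<le> 2 * (1 / L)" using exp_neg_le_inv[OF Lp] by simp
    also have "\<dots> = \<eta> / 2" unfolding L_def by simp
    finally show ?thesis .
  next
    case False
    have fj: "1 - (1 - a j)\<^sup>2 \<le> exp (- (\<kappa>\<^sup>2 * (real m)\<^sup>2 * (q j)\<^sup>2))" if j: "j \<in> T" for j
    proof -
      have x: "0 \<le> real m * q j" "real m * q j \<le> L" using False q j by auto
      have "real m * q j * \<kappa> \<le> 1 - exp (- (real m * q j))"
        unfolding \<kappa>_def using one_minus_exp_ge[OF x] by simp
      also have "\<dots> \<le> 1 - a j" unfolding a_def using q j by (simp add: one_minus_pow_exp)
      finally have h: "real m * q j * \<kappa> \<le> 1 - a j" .
      have "(real m * q j * \<kappa>)\<^sup>2 \<le> (1 - a j)\<^sup>2"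
        using h x kp by (intro power_mono) auto
      then have "1 - (1 - a j)\<^sup>2 \<le> 1 - \<kappa>\<^sup>2 * (real m)\<^sup>2 * (q j)\<^sup>2"
        by (simp add: power_mult_distrib algebra_simps)
      also have "\<dots> \<le> exp (- (\<kappa>\<^sup>2 * (real m)\<^sup>2 * (q j)\<^sup>2))"
        using exp_ge_add_one_self[of "- (\<kappa>\<^sup>2 * (real m)\<^sup>2 * (q j)\<^sup>2)"] by simp
      finally show ?thesis .
    qed
    have "(\<Prod>j\<in>T. 2 * (1 - q j) ^ m - (1 - q j) ^ n) = (\<Prod>j\<in>T. 1 - (1 - a j)\<^sup>2)"
      using f_eq by simp
    also have "\<dots> \<le> (\<Prod>j\<in>T. exp (- (\<kappa>\<^sup>2 * (real m)\<^sup>2 * (q j)\<^sup>2)))"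
      using f01 fj by (intro prod_mono) auto
    also have "\<dots> = exp (- (\<kappa>\<^sup>2 * (real m)\<^sup>2 * (\<Sum>j\<in>T. (q j)\<^sup>2)))"
      using T by (simp add: exp_sum[symmetric] sum_negf sum_distrib_left)
    also have "\<dots> \<le> exp (- (\<kappa>\<^sup>2 * (real m)\<^sup>2 * (8 / (\<eta> * \<kappa> ^ 2) / (real n)\<^sup>2)))"
    proof -
      have S': "8 / (\<eta> * \<kappa> ^ 2) / (real n)\<^sup>2 \<le> (\<Sum>j\<in>T. (q j)\<^sup>2)" using S unfolding \<kappa>_def L_def .
      have "\<kappa>\<^sup>2 * (real m)\<^sup>2 * (8 / (\<eta> * \<kappa> ^ 2) / (real n)\<^sup>2) \<le> \<kappa>\<^sup>2 * (real m)\<^sup>2 * (\<Sum>j\<in>T. (q j)\<^sup>2)"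
        using S' by (intro mult_left_mono) auto
      then show ?thesis by simp
    qed
    also have "\<kappa>\<^sup>2 * (real m)\<^sup>2 * (8 / (\<eta> * \<kappa> ^ 2) / (real n)\<^sup>2) = 2 / \<eta>"
      using kp m eta unfolding nm by (simp add: field_simps power2_eq_square)
    also have "exp (- (2 / \<eta>)) \<le> 1 / (2 / \<eta>)" using eta by (intro exp_neg_le_inv) auto
    also have "\<dots> = \<eta> / 2" by simp
    finally show ?thesis .
  qed
qed


lemma abs_split_powr:
  fixes x t :: real assumes "0 < t"
  shows "\<bar>x\<bar> powr t = max x 0 powr t + max (- x) 0 powr t"
  using assms by (cases "x \<ge> 0") (auto simp: max_def)

lemma star:
  fixes \<eta> t K P D c C' :: real and n :: nat and T :: "nat set" and p q :: "nat \<Rightarrow> real"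
  assumes eta: "0 < \<eta>" "\<eta> < 1" and tt: "1 \<le> t" "t \<le> 2" and n: "1 \<le> n" and T: "finite T"
    and p: "\<forall>j\<in>T. 0 \<le> p j" and q: "\<forall>j\<in>T. 0 \<le> q j"
    and psq: "(\<Sum>j\<in>T. (p j)\<^sup>2) \<le> 1 / (real n)\<^sup>2"
    and P: "P = (\<Sum>j\<in>T. p j)" and D: "D = (\<Sum>j\<in>T. q j - p j)"
    and Dle: "D \<le> 2 * ((4 / sqrt \<eta>) * sqrt (P / real n)) + 16 / (\<eta> * real n)"
    and K: "0 \<le> K" and qsq: "(\<Sum>j\<in>T. (q j)\<^sup>2) \<le> K / (real n)\<^sup>2"
    and c: "c = 1 + 4 / sqrt \<eta> + 16 / \<eta>"
    and C': "C' = 2 * c + K + 3"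
    and tn: "(\<Sum>j\<in>T. \<bar>q j - p j\<bar> powr t) powr (1 / t)
              \<ge> C' * (pow0 P ((2 - t) / t) / real n powr ((2 * t - 2) / t) + 1 / real n)"
  shows False
proof -
  define H where "H = pow0 P ((2 - t) / t) / real n powr ((2 * t - 2) / t) + 1 / real n"
  define dp where "dp = (\<lambda>j. max (q j - p j) 0)"
  define dm where "dm = (\<lambda>j. max (- (q j - p j)) 0)"
  define u where "u = max P (1 / real n)"
  define lam where "lam = 1 / ((real n)\<^sup>2 * u)"
  define B where "B = lam powr (t - 1) * u"
  have n0: "0 < real n" using n by simp
  have P0: "0 \<le> P" unfolding P using p by (intro sum_nonneg) auto
  have u0: "0 < u" unfolding u_def using n0 by (simp add: max.strict_coboundedI2)
  have lam0: "0 < lam" unfolding lam_def using u0 n0 by simp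
  have B0: "0 < B" unfolding B_def using lam0 u0 by simp
  have B2: "lam powr (t - 2) / (real n)\<^sup>2 = B"
  proof -
    have "lam powr (t - 1) = lam powr ((t - 2) + 1)" by simp
    also have "\<dots> = lam powr (t - 2) * lam powr 1" by (rule powr_add)
    also have "\<dots> = lam powr (t - 2) * lam" using lam0 by simp
    finally have "lam powr (t - 1) = lam powr (t - 2) * lam" .
    then show ?thesis unfolding B_def lam_def using u0 n0 by (simp add: field_simps)
  qed
  have dp0: "0 \<le> dp j" and dm0: "0 \<le> dm j" for j unfolding dp_def dm_def by auto
  have dmp: "dm j \<le> p j" if "j \<in> T" for j unfolding dm_def using p q that by auto
  have dpq: "dp j \<le> q j" if "j \<in> T" for j unfolding dp_def using p q that by auto
  have Mle: "(\<Sum>j\<in>T. dp j) \<le> D + P"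
  proof -
    have "(\<Sum>j\<in>T. dp j) = D + (\<Sum>j\<in>T. dm j)"
      unfolding D dp_def dm_def by (simp add: sum.distrib[symmetric] max_def) (intro sum.cong, auto)
    also have "\<dots> \<le> D + P" unfolding P using dmp by (simp add: sum_mono)
    finally show ?thesis .
  qed
  have tau: "2 * ((4 / sqrt \<eta>) * sqrt (P / real n)) \<le> (4 / sqrt \<eta>) * (P + 1 / real n)"
  proof -
    have "sqrt (P / real n) = sqrt (P * (1 / real n))" by simp
    also have "\<dots> \<le> (P + 1 / real n) / 2" using P0 n0 by (intro arith_geo_mean_sqrt) auto
    finally have "2 * sqrt (P / real n) \<le> P + 1 / real n" by simp
    then have "(4 / sqrt \<eta>) * (2 * sqrt (P / real n)) \<le> (4 / sqrt \<eta>) * (P + 1 / real n)"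
      using eta by (intro mult_left_mono) auto
    then show ?thesis by (simp only: mult.left_commute[of 2])
  qed
  have Mle2: "(\<Sum>j\<in>T. dp j) \<le> 2 * c * u"
  proof -
    have Pu: "P \<le> u" and nu: "1 / real n \<le> u" unfolding u_def by auto
    have "(\<Sum>j\<in>T. dp j) \<le> P + (4 / sqrt \<eta>) * (P + 1 / real n) + 16 / \<eta> * (1 / real n)"
      using Mle Dle tau by simp
    also have "\<dots> \<le> u + (4 / sqrt \<eta>) * (2 * u) + 16 / \<eta> * u"
      using Pu nu eta by (intro add_mono mult_left_mono) auto
    also have "\<dots> \<le> 2 * c * u"
    proof -
      have e: "2 * c * u = 2 * u + (4 / sqrt \<eta>) * (2 * u) + 2 * (16 / \<eta> * u)" unfolding c by (simp add: algebra_simps)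
      have "0 \<le> 16 / \<eta> * u" using u0 eta by simp
      then show ?thesis using e u0 by linarith
    qed
    finally show ?thesis .
  qed
  have ydp: "(\<Sum>j\<in>T. dp j powr t) \<le> (2 * c + K) * B"
  proof -
    have "(\<Sum>j\<in>T. dp j powr t) \<le> (\<Sum>j\<in>T. lam powr (t - 1) * dp j + lam powr (t - 2) * (dp j)\<^sup>2)"
      using lam0 tt dp0 by (intro sum_mono young_t) auto
    also have "\<dots> = lam powr (t - 1) * (\<Sum>j\<in>T. dp j) + lam powr (t - 2) * (\<Sum>j\<in>T. (dp j)\<^sup>2)"
      by (simp add: sum.distrib sum_distrib_left)
    also have "\<dots> \<le> lam powr (t - 1) * (2 * c * u) + lam powr (t - 2) * (K / (real n)\<^sup>2)"
    proof (intro add_mono mult_left_mono)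
      show "(\<Sum>j\<in>T. (dp j)\<^sup>2) \<le> K / (real n)\<^sup>2"
        using qsq dpq dp0 by (meson order_trans power_mono sum_mono)
    qed (use Mle2 in auto)
    also have "\<dots> = (2 * c + K) * B"
    proof -
      have a: "lam powr (t - 1) * (2 * c * u) = 2 * c * B" unfolding B_def by simp
      have b: "lam powr (t - 2) * (K / (real n)\<^sup>2) = K * B" unfolding B2[symmetric] by simp
      show ?thesis unfolding a b by (simp add: algebra_simps)
    qed
    finally show ?thesis .
  qed
  have ydm: "(\<Sum>j\<in>T. dm j powr t) \<le> 2 * B"
  proof -
    have "(\<Sum>j\<in>T. dm j powr t) \<le> (\<Sum>j\<in>T. lam powr (t - 1) * dm j + lam powr (t - 2) * (dm j)\<^sup>2)"
      using lam0 tt dm0 by (intro sum_mono young_t) auto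
    also have "\<dots> = lam powr (t - 1) * (\<Sum>j\<in>T. dm j) + lam powr (t - 2) * (\<Sum>j\<in>T. (dm j)\<^sup>2)"
      by (simp add: sum.distrib sum_distrib_left)
    also have "\<dots> \<le> lam powr (t - 1) * u + lam powr (t - 2) * (1 / (real n)\<^sup>2)"
    proof (intro add_mono mult_left_mono)
      show "(\<Sum>j\<in>T. (dm j)\<^sup>2) \<le> 1 / (real n)\<^sup>2"
        using psq dmp dm0 by (meson order_trans power_mono sum_mono)
      have "(\<Sum>j\<in>T. dm j) \<le> P" unfolding P using dmp by (simp add: sum_mono)
      then show "(\<Sum>j\<in>T. dm j) \<le> u" unfolding u_def by simp
    qed auto
    also have "\<dots> = 2 * B"
    proof -
      have b: "lam powr (t - 2) * (1 / (real n)\<^sup>2) = B" unfolding B2[symmetric] by simp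
      show ?thesis unfolding b unfolding B_def by simp
    qed
    finally show ?thesis .
  qed
  have tsum: "(\<Sum>j\<in>T. \<bar>q j - p j\<bar> powr t) \<le> (2 * c + K + 2) * B"
  proof -
    have "(\<Sum>j\<in>T. \<bar>q j - p j\<bar> powr t) = (\<Sum>j\<in>T. dp j powr t) + (\<Sum>j\<in>T. dm j powr t)"
      unfolding dp_def dm_def using tt by (simp add: abs_split_powr sum.distrib)
    then show ?thesis using ydp ydm by (simp add: algebra_simps)
  qed
  have H0: "0 < H" unfolding H_def using n0 P0 by (intro add_nonneg_pos divide_nonneg_nonneg pow0_nonneg) auto
  have BH: "B \<le> H powr t"
  proof (cases "P \<le> 1 / real n")
    case True
    then have "u = 1 / real n" unfolding u_def by simp
    then have "B = (1 / real n) powr (t - 1) * (1 / real n) powr 1"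
      unfolding B_def lam_def using n0 by (simp add: power2_eq_square)
    also have "\<dots> = (1 / real n) powr ((t - 1) + 1)" by (rule powr_add[symmetric])
    finally have "B = (1 / real n) powr t" by simp
    also have "\<dots> \<le> H powr t" unfolding H_def using tt n0 P0
      by (intro powr_mono2) (auto intro!: divide_nonneg_nonneg pow0_nonneg)
    finally show ?thesis .
  next
    case False
    then have uP: "u = P" unfolding u_def by (auto simp: max_def)
    have "0 < 1 / real n" using n0 by simp
    then have Pp: "0 < P" using False by linarith
    have "B = (1 / ((real n)\<^sup>2 * P)) powr (t - 1) * P" unfolding B_def lam_def uP ..
    also have "\<dots> = P powr (2 - t) / real n powr (2 * t - 2)"
    proof -
      have a: "((real n)\<^sup>2) powr (t - 1) = real n powr (2 * t - 2)"
      proof -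
        have "((real n)\<^sup>2) powr (t - 1) = (real n powr 2) powr (t - 1)" using n0 by (subst powr_numeral) auto
        also have "\<dots> = real n powr (2 * (t - 1))" by (rule powr_powr)
        finally show ?thesis by (simp add: algebra_simps)
      qed
      have "(1 / ((real n)\<^sup>2 * P)) powr (t - 1) = 1 / (((real n)\<^sup>2) powr (t - 1) * P powr (t - 1))"
        using n0 Pp by (simp add: powr_divide powr_mult)
      also have "\<dots> = 1 / (real n powr (2 * t - 2) * P powr (t - 1))" unfolding a ..
      finally have e: "(1 / ((real n)\<^sup>2 * P)) powr (t - 1) = 1 / (real n powr (2 * t - 2) * P powr (t - 1))" .
      have "P powr (2 - t) = P powr (1 - (t - 1))" by simp
      also have "\<dots> = P powr 1 / P powr (t - 1)" by (rule powr_diff)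
      also have "\<dots> = P / P powr (t - 1)" using Pp by simp
      finally have e2: "P powr (2 - t) = P / P powr (t - 1)" .
      show ?thesis unfolding e e2 by simp
    qed
    also have "\<dots> = (pow0 P ((2 - t) / t) / real n powr ((2 * t - 2) / t)) powr t"
    proof -
      have "pow0 P ((2 - t) / t) = P powr ((2 - t) / t)" unfolding pow0_def using Pp by auto
      then show ?thesis using Pp n0 tt by (simp add: powr_divide powr_powr)
    qed
    also have "\<dots> \<le> H powr t" unfolding H_def using tt n0 P0
      by (intro powr_mono2) (auto intro!: divide_nonneg_nonneg pow0_nonneg)
    finally show ?thesis .
  qed
  have C'1: "1 \<le> C'" unfolding C' c using eta K by simp
  have "C' * H \<le> (\<Sum>j\<in>T. \<bar>q j - p j\<bar> powr t) powr (1 / t)" using tn unfolding H_def .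
  then have "(C' * H) powr t \<le> ((\<Sum>j\<in>T. \<bar>q j - p j\<bar> powr t) powr (1 / t)) powr t"
    using C'1 H0 tt by (intro powr_mono2) auto
  also have "\<dots> = (\<Sum>j\<in>T. \<bar>q j - p j\<bar> powr t)"
    using tt by (simp add: powr_powr sum_nonneg)
  finally have low: "C' powr t * H powr t \<le> (\<Sum>j\<in>T. \<bar>q j - p j\<bar> powr t)"
    using C'1 H0 by (simp add: powr_mult)
  have "C' \<le> C' powr t" using C'1 tt powr_mono[of 1 t C'] by simp
  then have "C' * H powr t \<le> C' powr t * H powr t" using H0 by (intro mult_right_mono) auto
  also have "\<dots> \<le> (2 * c + K + 2) * B" using low tsum by linarith
  also have "\<dots> \<le> (2 * c + K + 2) * H powr t"
    using BH unfolding c using eta K by (intro mult_left_mono) auto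
  finally have "C' * H powr t \<le> (2 * c + K + 2) * H powr t" .
  then have "C' \<le> 2 * c + K + 2" using H0 by simp
  then show False unfolding C' by simp
qed


lemma T1_split: "T1 A N n p X = (\<Sum>j\<in>{A<..N}. real (cnt n X j) / real n - q j) + (\<Sum>j\<in>{A<..N}. q j - p j)"
  unfolding T1_def by (simp add: sum.distrib[symmetric])

lemma psi1_bound_p:
  fixes \<eta> :: real
  assumes eta: "0 < \<eta>" and n: "1 \<le> n" and p: "\<forall>j\<in>{1..N}. 0 \<le> p j \<and> p j \<le> 1"
  shows "Pq N n p (psi1 \<eta> A N n p) \<le> \<eta> / 16"
proof -
  define P where "P = (\<Sum>j\<in>{A<..N}. p j)"
  define Z where "Z = (\<lambda>X. (\<Sum>j\<in>{A<..N}. real (cnt n X j) / real n - p j))"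
  have TZ: "T1 A N n p X = Z X" for X unfolding Z_def T1_def ..
  have sub: "{A<..N} \<subseteq> {1..N}" by auto
  have n0: "0 < real n" using n by simp
  have V: "Ew N n p (\<lambda>X. (Z X)\<^sup>2) \<le> P / real n"
  proof -
    have "Ew N n p (\<lambda>X. (Z X)\<^sup>2) = (\<Sum>j\<in>{A<..N}. p j * (1 - p j)) / real n"
      unfolding Z_def by (rule variance[OF sub n])
    also have "\<dots> \<le> P / real n" unfolding P_def using p sub n0
      by (intro divide_right_mono sum_mono) (auto simp: mult_left_le subsetD)
    finally show ?thesis .
  qed
  have P0: "0 \<le> P" unfolding P_def using p sub by (intro sum_nonneg) (auto simp: subsetD)
  show ?thesis
  proof (cases "P = 0")
    case True
    have "Pq N n p (psi1 \<eta> A N n p) \<le> Pq N n p (\<lambda>X. (Z X)\<^sup>2 > 0)"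
      using p by (rule Pq_mono) (auto simp: psi1_def TZ P_def[symmetric] True)
    also have "\<dots> \<le> 0" using p V True by (intro Markov0) auto
    finally show ?thesis using eta by simp
  next
    case False
    then have Pp: "0 < P" using P0 by simp
    define \<tau> where "\<tau> = 4 / sqrt \<eta> * sqrt (P / real n)"
    have tau0: "0 < \<tau>" unfolding \<tau>_def using Pp n0 eta by simp
    have tau2: "\<tau>\<^sup>2 = 16 / \<eta> * (P / real n)"
      unfolding \<tau>_def using Pp n0 eta by (simp add: power_mult_distrib power_divide)
    have "Pq N n p (psi1 \<eta> A N n p) \<le> Pq N n p (\<lambda>X. (Z X)\<^sup>2 \<ge> \<tau>\<^sup>2)"
    proof (rule Pq_mono[OF p])
      fix X assume "psi1 \<eta> A N n p X"
      then have "\<tau> < \<bar>Z X\<bar>" unfolding psi1_def TZ \<tau>_def P_def by simp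
      then have "\<tau>\<^sup>2 \<le> \<bar>Z X\<bar>\<^sup>2" using tau0 by (intro power_mono) auto
      then show "(Z X)\<^sup>2 \<ge> \<tau>\<^sup>2" by simp
    qed
    also have "\<dots> \<le> Ew N n p (\<lambda>X. (Z X)\<^sup>2) / \<tau>\<^sup>2" using p tau0 by (intro Markov) auto
    also have "\<dots> \<le> (P / real n) / \<tau>\<^sup>2" using V tau0 by (intro divide_right_mono) auto
    also have "\<dots> = \<eta> / 16" unfolding tau2 using Pp n0 eta by (simp add: field_simps)
    finally show ?thesis .
  qed
qed

lemma case1:
  fixes \<eta> :: real
  assumes eta: "0 < \<eta>" "\<eta> < 1" and n: "1 \<le> n" and q: "\<forall>j\<in>{1..N}. 0 \<le> q j \<and> q j \<le> 1"
    and p: "\<forall>j\<in>{1..N}. 0 \<le> p j"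
    and D2: "(\<Sum>j\<in>{A<..N}. q j - p j) \<ge> 2 * (4 / sqrt \<eta> * sqrt ((\<Sum>j\<in>{A<..N}. p j) / real n))"
    and D16: "(\<Sum>j\<in>{A<..N}. q j - p j) \<ge> 16 / (\<eta> * real n)"
  shows "Pq N n q (\<lambda>X. \<not> psi1 \<eta> A N n p X) \<le> \<eta> / 2"
proof -
  define P where "P = (\<Sum>j\<in>{A<..N}. p j)"
  define D where "D = (\<Sum>j\<in>{A<..N}. q j - p j)"
  define \<tau> where "\<tau> = 4 / sqrt \<eta> * sqrt (P / real n)"
  define Z where "Z = (\<lambda>X. (\<Sum>j\<in>{A<..N}. real (cnt n X j) / real n - q j))"
  have TZ: "T1 A N n p X = Z X + D" for X unfolding Z_def D_def by (rule T1_split)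
  have sub: "{A<..N} \<subseteq> {1..N}" by auto
  have n0: "0 < real n" using n by simp
  have P0: "0 \<le> P" unfolding P_def using p sub by (intro sum_nonneg) (auto simp: subsetD)
  have tau0: "0 \<le> \<tau>" unfolding \<tau>_def using P0 n0 eta by simp
  have D2': "2 * \<tau> \<le> D" using D2 unfolding D_def \<tau>_def P_def .
  have D16': "16 / (\<eta> * real n) \<le> D" using D16 unfolding D_def .
  have Dp: "0 < D" using D16' eta n0 by (smt (verit) divide_pos_pos mult_pos_pos)
  have DT: "D / 2 \<le> D - \<tau>" using D2' by simp
  have DT0: "0 < D - \<tau>" using DT Dp by simp
  have V: "Ew N n q (\<lambda>X. (Z X)\<^sup>2) \<le> (P + D) / real n"
  proof -
    have "Ew N n q (\<lambda>X. (Z X)\<^sup>2) = (\<Sum>j\<in>{A<..N}. q j * (1 - q j)) / real n"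
      unfolding Z_def by (rule variance[OF sub n])
    also have "\<dots> \<le> (\<Sum>j\<in>{A<..N}. q j) / real n" using q sub n0
      by (intro divide_right_mono sum_mono) (auto simp: mult_left_le subsetD)
    also have "(\<Sum>j\<in>{A<..N}. q j) = P + D" unfolding P_def D_def by (simp add: sum_subtractf)
    finally show ?thesis .
  qed
  have "Pq N n q (\<lambda>X. \<not> psi1 \<eta> A N n p X) \<le> Pq N n q (\<lambda>X. (Z X)\<^sup>2 \<ge> (D - \<tau>)\<^sup>2)"
  proof (rule Pq_mono[OF q])
    fix X assume "\<not> psi1 \<eta> A N n p X"
    then have "\<bar>Z X + D\<bar> \<le> \<tau>" unfolding psi1_def TZ \<tau>_def P_def by simp
    then have "D - \<tau> \<le> - Z X" by linarith
    then have "(D - \<tau>)\<^sup>2 \<le> (- Z X)\<^sup>2" using DT0 by (intro power_mono) auto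
    then show "(Z X)\<^sup>2 \<ge> (D - \<tau>)\<^sup>2" by simp
  qed
  also have "\<dots> \<le> Ew N n q (\<lambda>X. (Z X)\<^sup>2) / (D - \<tau>)\<^sup>2" using q DT0 by (intro Markov) auto
  also have "\<dots> \<le> ((P + D) / real n) / (D / 2)\<^sup>2"
  proof -
    have "(D / 2)\<^sup>2 \<le> (D - \<tau>)\<^sup>2" using DT Dp by (intro power_mono) auto
    moreover have "0 \<le> Ew N n q (\<lambda>X. (Z X)\<^sup>2)"
      unfolding Ew_def using sw_nonneg[OF q] by (intro sum_nonneg) auto
    ultimately show ?thesis using V Dp by (intro frac_le) auto
  qed
  also have "\<dots> = 4 * P / (real n * D\<^sup>2) + 4 / (real n * D)"
    using Dp n0 by (simp add: field_simps power2_eq_square)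
  also have "\<dots> \<le> \<eta> / 16 + \<eta> / 4"
  proof (rule add_mono)
    have tau2: "\<tau>\<^sup>2 = 16 / \<eta> * (P / real n)"
      unfolding \<tau>_def using P0 n0 eta by (simp add: power_mult_distrib power_divide)
    have "(2 * \<tau>)\<^sup>2 \<le> D\<^sup>2" using D2' tau0 by (intro power_mono) auto
    then have "64 / \<eta> * (P / real n) \<le> D\<^sup>2" using tau2 by (simp add: power_mult_distrib)
    then have "64 * P \<le> \<eta> * real n * D\<^sup>2" using eta n0 by (simp add: field_simps)
    then show "4 * P / (real n * D\<^sup>2) \<le> \<eta> / 16" using n0 Dp by (simp add: field_simps)
    have "16 / \<eta> \<le> real n * D" using D16' n0 eta by (simp add: field_simps)
    then show "4 / (real n * D) \<le> \<eta> / 4" using n0 Dp eta by (simp add: field_simps)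
  qed
  also have "\<dots> \<le> \<eta> / 2" using eta by simp
  finally show ?thesis .
qed

lemma case2:
  fixes \<eta> t :: real
  assumes eta: "0 < \<eta>" "\<eta> < 1" and tt: "1 \<le> t" "t \<le> 2" and n: "2 \<le> n" "even n"
    and q: "\<forall>j\<in>{1..N}. 0 \<le> q j \<and> q j \<le> 1" and p: "\<forall>j\<in>{1..N}. 0 \<le> p j"
    and psq: "(\<Sum>j\<in>{A<..N}. (p j)\<^sup>2) \<le> 1 / (real n)\<^sup>2"
    and Dle: "(\<Sum>j\<in>{A<..N}. q j - p j) \<le> 2 * (4 / sqrt \<eta> * sqrt ((\<Sum>j\<in>{A<..N}. p j) / real n)) + 16 / (\<eta> * real n)"
    and tn: "tail_norm t A N (\<lambda>j. q j - p j)
              \<ge> (2 * (1 + 4 / sqrt \<eta> + 16 / \<eta>) + 8 / (\<eta> * exp (- (4/\<eta>)) ^ 2) + 3) *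
                (pow0 (\<Sum>i\<in>{A<..N}. p i) ((2 - t) / t) / real n powr ((2 * t - 2) / t) + 1 / real n)"
  shows "Pq N n q (\<lambda>X. \<not> psi2 A N n X) \<le> \<eta> / 2"
proof -
  define K where "K = 8 / (\<eta> * exp (- (4/\<eta>)) ^ 2)"
  define m where "m = n div 2"
  have nm: "n = 2 * m" using n unfolding m_def by simp
  have m1: "1 \<le> m" using n nm by simp
  have sub: "{A<..N} \<subseteq> {1..N}" by auto
  have K0: "0 \<le> K" unfolding K_def using eta by simp
  have Sq: "K / (real n)\<^sup>2 \<le> (\<Sum>j\<in>{A<..N}. (q j)\<^sup>2)"
  proof (rule ccontr)
    assume "\<not> ?thesis"
    then have qsq: "(\<Sum>j\<in>{A<..N}. (q j)\<^sup>2) \<le> K / (real n)\<^sup>2" by simp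
    show False
    proof (rule star[OF eta tt _ _ _ _ psq refl refl _ K0 qsq refl refl])
      show "1 \<le> n" using n by simp
      show "finite {A<..N}" by simp
      show "\<forall>j\<in>{A<..N}. 0 \<le> p j" using p by auto
      show "\<forall>j\<in>{A<..N}. 0 \<le> q j" using q by auto
      show "(\<Sum>j\<in>{A<..N}. q j - p j) \<le> 2 * (4 / sqrt \<eta> * sqrt ((\<Sum>j\<in>{A<..N}. p j) / real n)) + 16 / (\<eta> * real n)"
        using Dle .
      show "(\<Sum>j\<in>{A<..N}. \<bar>q j - p j\<bar> powr t) powr (1 / t) \<ge>
        (2 * (1 + 4 / sqrt \<eta> + 16 / \<eta>) + K + 3) *
         (pow0 (\<Sum>j\<in>{A<..N}. p j) ((2 - t) / t) / real n powr ((2 * t - 2) / t) + 1 / real n)"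
        using tn unfolding tail_norm_def K_def .
    qed
  qed
  have "Pq N n q (\<lambda>X. \<not> psi2 A N n X) \<le>
     Pq N n q (\<lambda>X. \<forall>j\<in>{A<..N}. \<not> ((\<exists>l\<in>{1..m}. X l j) \<and> (\<exists>l\<in>{m<..n}. X l j)))"
  proof (rule Pq_mono[OF q])
    fix X assume np: "\<not> psi2 A N n X"
    show "\<forall>j\<in>{A<..N}. \<not> ((\<exists>l\<in>{1..m}. X l j) \<and> (\<exists>l\<in>{m<..n}. X l j))"
    proof (intro ballI notI)
      fix j assume j: "j \<in> {A<..N}" and ex: "(\<exists>l\<in>{1..m}. X l j) \<and> (\<exists>l\<in>{m<..n}. X l j)"
      then obtain l1 l2 where l: "l1 \<in> {1..m}" "X l1 j" "l2 \<in> {m<..n}" "X l2 j" by blast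
      have "{l1, l2} \<subseteq> {l\<in>{1..n}. X l j}" using l nm by auto
      then have "card {l1, l2} \<le> card {l\<in>{1..n}. X l j}" by (intro card_mono) auto
      moreover have "card {l1, l2} = 2" using l by auto
      ultimately have "cnt n X j \<ge> 2" unfolding cnt_def by simp
      then show False using np j unfolding psi2_def by auto
    qed
  qed
  also have "\<dots> = (\<Prod>j\<in>{A<..N}. 2 * (1 - q j) ^ m - (1 - q j) ^ n)" by (rule noE_prod[OF nm])
  also have "\<dots> \<le> \<eta> / 2"
    using eta nm m1 q Sq unfolding K_def by (intro prod_bound) auto
  finally show ?thesis .
qed

theorem proposition6:
  fixes \<eta> :: real
  assumes "0 < \<eta>" and "\<eta> < 1"
  shows "\<exists>c0 > 0. \<forall>t::real. 1 \<le> t \<and> t \<le> 2 \<longrightarrow> (\<exists>C' > 0.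
    \<forall>cI cA :: real. 0 < cI \<and> cI \<le> c0 \<and> 0 < cA \<and> cA \<le> c0 \<longrightarrow>
    (\<forall>(N::nat) (n::nat) (p::nat \<Rightarrow> real).
       2 \<le> N \<and> 2 \<le> n \<and> even n \<and>
       (\<forall>j\<in>{1..N}. 0 \<le> p j \<and> p j \<le> 1/2) \<and>
       (\<forall>i\<in>{1..N}. \<forall>j\<in>{1..N}. i \<le> j \<longrightarrow> p j \<le> p i) \<longrightarrow>
       (let A = A_idx t cI cA N n p in
         Pq N n p (test \<eta> t cI cA N n p) \<le> \<eta> / 2 \<and>
         (\<forall>q::nat \<Rightarrow> real. (\<forall>j\<in>{1..N}. 0 \<le> q j \<and> q j \<le> 1) \<and>
            tail_norm t A N (\<lambda>j. q j - p j)
              \<ge> C' * (pow0 (\<Sum>i\<in>{A<..N}. p i) ((2 - t) / t) / real n powr ((2 * t - 2) / t)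
                      + 1 / real n) \<longrightarrow>
            Pq N n q (\<lambda>X. \<not> test \<eta> t cI cA N n p X) \<le> \<eta> / 2))))"
proof -
  define c0 where "c0 = \<eta> / 8"
  have eta: "0 < \<eta>" "\<eta> < 1" using assms by auto
  show ?thesis
  proof (rule exI[of _ c0], intro conjI allI impI)
    show "0 < c0" unfolding c0_def using eta by simp
    fix t :: real assume tt': "1 \<le> t \<and> t \<le> 2"
    then have tt: "1 \<le> t" "t \<le> 2" by auto
    define C' where "C' = 2 * (1 + 4 / sqrt \<eta> + 16 / \<eta>) + 8 / (\<eta> * exp (- (4/\<eta>)) ^ 2) + 3"
    have C'0: "0 < C'" unfolding C'_def using eta by (intro add_nonneg_pos) auto
    show "\<exists>C' > 0. \<forall>cI cA :: real. 0 < cI \<and> cI \<le> c0 \<and> 0 < cA \<and> cA \<le> c0 \<longrightarrow>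
    (\<forall>(N::nat) (n::nat) (p::nat \<Rightarrow> real).
       2 \<le> N \<and> 2 \<le> n \<and> even n \<and>
       (\<forall>j\<in>{1..N}. 0 \<le> p j \<and> p j \<le> 1/2) \<and>
       (\<forall>i\<in>{1..N}. \<forall>j\<in>{1..N}. i \<le> j \<longrightarrow> p j \<le> p i) \<longrightarrow>
       (let A = A_idx t cI cA N n p in
         Pq N n p (test \<eta> t cI cA N n p) \<le> \<eta> / 2 \<and>
         (\<forall>q::nat \<Rightarrow> real. (\<forall>j\<in>{1..N}. 0 \<le> q j \<and> q j \<le> 1) \<and>
            tail_norm t A N (\<lambda>j. q j - p j)
              \<ge> C' * (pow0 (\<Sum>i\<in>{A<..N}. p i) ((2 - t) / t) / real n powr ((2 * t - 2) / t)
                      + 1 / real n) \<longrightarrow>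
            Pq N n q (\<lambda>X. \<not> test \<eta> t cI cA N n p X) \<le> \<eta> / 2)))"
    proof (rule exI[of _ C'], intro conjI allI impI C'0)
      fix cI cA :: real and N n :: nat and p :: "nat \<Rightarrow> real"
      assume cc: "0 < cI \<and> cI \<le> c0 \<and> 0 < cA \<and> cA \<le> c0"
      assume hyp: "2 \<le> N \<and> 2 \<le> n \<and> even n \<and>
       (\<forall>j\<in>{1..N}. 0 \<le> p j \<and> p j \<le> 1/2) \<and>
       (\<forall>i\<in>{1..N}. \<forall>j\<in>{1..N}. i \<le> j \<longrightarrow> p j \<le> p i)"
      define A where "A = A_idx t cI cA N n p"
      have n2: "2 \<le> n" and ev: "even n" using hyp by auto
      have n1: "1 \<le> n" using n2 by simp
      have n0: "0 < real n" using n1 by simp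
      have ph: "\<forall>j\<in>{1..N}. 0 \<le> p j \<and> p j \<le> 1/2" using hyp by blast
      have p01: "\<forall>j\<in>{1..N}. 0 \<le> p j \<and> p j \<le> 1"
      proof
        fix j assume "j \<in> {1..N}"
        then have "0 \<le> p j \<and> p j \<le> 1/2" using ph by blast
        then show "0 \<le> p j \<and> p j \<le> 1" by linarith
      qed
      have p0: "\<forall>j\<in>{1..N}. 0 \<le> p j" using p01 by auto
      have cA1: "cA ^ 4 \<le> cA"
      proof -
        have "cA \<le> 1" using cc eta unfolding c0_def by simp
        then have "cA ^ 4 \<le> cA ^ 1" using cc by (intro power_decreasing) auto
        then show ?thesis by simp
      qed
      have csum: "cI + cA ^ 4 \<le> \<eta> / 4" using cc cA1 unfolding c0_def by simp
      have tail: "(\<Sum>i\<in>{A<..N}. (p i)\<^sup>2) \<le> (cI + cA ^ 4) / (real n)\<^sup>2"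
        unfolding A_def using cc tt n1 p0 by (intro tail_sq) auto
      have tail': "(\<Sum>i\<in>{A<..N}. (p i)\<^sup>2) \<le> \<eta> / 4 / (real n)\<^sup>2"
        using tail divide_right_mono[OF csum, of "(real n)\<^sup>2"] by simp
      have tail1: "(\<Sum>i\<in>{A<..N}. (p i)\<^sup>2) \<le> 1 / (real n)\<^sup>2"
      proof -
        have "\<eta> / 4 \<le> 1" using eta by simp
        then have "\<eta> / 4 / (real n)\<^sup>2 \<le> 1 / (real n)\<^sup>2" by (rule divide_right_mono) simp
        then show ?thesis using tail' by linarith
      qed
      have testeq: "test \<eta> t cI cA N n p = (\<lambda>X. psi1 \<eta> A N n p X \<or> psi2 A N n X)"
        unfolding test_def A_def Let_def by simp
      show "let A = A_idx t cI cA N n p in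
         Pq N n p (test \<eta> t cI cA N n p) \<le> \<eta> / 2 \<and>
         (\<forall>q::nat \<Rightarrow> real. (\<forall>j\<in>{1..N}. 0 \<le> q j \<and> q j \<le> 1) \<and>
            tail_norm t A N (\<lambda>j. q j - p j)
              \<ge> C' * (pow0 (\<Sum>i\<in>{A<..N}. p i) ((2 - t) / t) / real n powr ((2 * t - 2) / t)
                      + 1 / real n) \<longrightarrow>
            Pq N n q (\<lambda>X. \<not> test \<eta> t cI cA N n p X) \<le> \<eta> / 2)"
        unfolding Let_def A_def[symmetric]
      proof (intro conjI allI impI)
        have "Pq N n p (test \<eta> t cI cA N n p) \<le> Pq N n p (psi1 \<eta> A N n p) + Pq N n p (psi2 A N n)"
          unfolding testeq using Pq_union[OF p01] .
        also have "\<dots> \<le> \<eta> / 16 + real n ^ 2 / 2 * (\<Sum>j\<in>{A<..N}. (p j)\<^sup>2)"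
          using psi1_bound_p[OF eta(1) n1 p01] psi2_bound[OF p01] by (rule add_mono)
        also have "\<dots> \<le> \<eta> / 16 + real n ^ 2 / 2 * (\<eta> / 4 / (real n)\<^sup>2)"
          using tail' n0 by (intro add_mono mult_left_mono) auto
        also have "\<dots> \<le> \<eta> / 2" using n0 eta by simp
        finally show "Pq N n p (test \<eta> t cI cA N n p) \<le> \<eta> / 2" .
      next
        fix q :: "nat \<Rightarrow> real"
        assume qh: "(\<forall>j\<in>{1..N}. 0 \<le> q j \<and> q j \<le> 1) \<and>
            tail_norm t A N (\<lambda>j. q j - p j)
              \<ge> C' * (pow0 (\<Sum>i\<in>{A<..N}. p i) ((2 - t) / t) / real n powr ((2 * t - 2) / t)
                      + 1 / real n)"
        then have q: "\<forall>j\<in>{1..N}. 0 \<le> q j \<and> q j \<le> 1" by auto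
        define P where "P = (\<Sum>j\<in>{A<..N}. p j)"
        define D where "D = (\<Sum>j\<in>{A<..N}. q j - p j)"
        define \<tau> where "\<tau> = 4 / sqrt \<eta> * sqrt (P / real n)"
        have tau0: "0 \<le> \<tau>" unfolding \<tau>_def P_def using p0 n0 eta
          by (intro mult_nonneg_nonneg real_sqrt_ge_zero divide_nonneg_nonneg sum_nonneg) auto
        show "Pq N n q (\<lambda>X. \<not> test \<eta> t cI cA N n p X) \<le> \<eta> / 2"
        proof (cases "2 * \<tau> \<le> D \<and> 16 / (\<eta> * real n) \<le> D")
          case True
          have "Pq N n q (\<lambda>X. \<not> test \<eta> t cI cA N n p X) \<le> Pq N n q (\<lambda>X. \<not> psi1 \<eta> A N n p X)"
            using q by (rule Pq_mono) (simp add: testeq)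
          also have "\<dots> \<le> \<eta> / 2"
            using True by (intro case1[OF eta n1 q p0]) (auto simp: D_def \<tau>_def P_def)
          finally show ?thesis .
        next
          case False
          have pos: "0 < 16 / (\<eta> * real n)" using eta n0 by simp
          have Dle: "D \<le> 2 * \<tau> + 16 / (\<eta> * real n)" using False tau0 pos by linarith
          have "Pq N n q (\<lambda>X. \<not> test \<eta> t cI cA N n p X) \<le> Pq N n q (\<lambda>X. \<not> psi2 A N n X)"
            using q by (rule Pq_mono) (simp add: testeq)
          also have "\<dots> \<le> \<eta> / 2"
          proof (rule case2[OF eta tt n2 ev q p0 tail1])
            show "(\<Sum>j\<in>{A<..N}. q j - p j) \<le> 2 * (4 / sqrt \<eta> * sqrt ((\<Sum>j\<in>{A<..N}. p j) / real n)) + 16 / (\<eta> * real n)"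
              using Dle unfolding D_def \<tau>_def P_def .
            show "tail_norm t A N (\<lambda>j. q j - p j)
              \<ge> (2 * (1 + 4 / sqrt \<eta> + 16 / \<eta>) + 8 / (\<eta> * exp (- (4/\<eta>)) ^ 2) + 3) *
                (pow0 (\<Sum>i\<in>{A<..N}. p i) ((2 - t) / t) / real n powr ((2 * t - 2) / t) + 1 / real n)"
              using qh unfolding C'_def by auto
          qed
          finally show ?thesis .
        qed
      qed
    qed
  qed
qed

end
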